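(* Let $\mu_0\in(-1,0)$ and $y>0$. If $$x\ge \frac{y^{\mu_0}e^{-y}}{\Gamma(\mu_0+1,y)}-1$$ (and $x>0$), then $Q_{\mu_0}(x,y)>0$.
   Context: For real $\mu$, $x>0$, $y\ge 0$: $Q_{\mu}(x,y)=x^{\frac12(1-\mu)}\int_y^{\infty} t^{\frac12(\mu-1)}e^{-t-x}I_{\mu-1}(2\sqrt{xt})\,dt$, where $I_\nu$ is the modified Bessel function of the first kind. $\Gamma(a,y)=\int_y^\infty t^{a-1}e^{-t}dt$. *)

theory Defs
  imports "HOL-Analysis.Analysis"
begin

text \<open>The reciprocal Gamma function rGamma (zero at the poles) is used, as is standard.\<close>
definition besselI :: "real \<Rightarrow> real \<Rightarrow> real" where
  "besselI nu z = (\<Sum>k. (z / 2) powr (2 * real k + nu) * rGamma (real k + nu + 1) / fact k)"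

definition upper_Gamma :: "real \<Rightarrow> real \<Rightarrow> real" where
  "upper_Gamma a y = (LBINT t:{y..}. t powr (a - 1) * exp (- t))"

definition marcumQ :: "real \<Rightarrow> real \<Rightarrow> real \<Rightarrow> real" where
  "marcumQ mu x y = x powr ((1 - mu) / 2) *
     (LBINT t:{y..}. t powr ((mu - 1) / 2) * exp (- t - x) * besselI (mu - 1) (2 * sqrt (x * t)))"

end

theory Submission
  imports Defs
begin

definition gk :: "real \<Rightarrow> real \<Rightarrow> nat \<Rightarrow> real \<Rightarrow> real" where
  "gk m x k t = x ^ k / fact k * rGamma (real k + m) * t powr (real k + m - 1) * exp (- t)"

lemma gk_Suc:
  assumes "t > 0" "real n + m \<noteq> 0"
  shows "gk m x (Suc n) t = gk m x n t * (x * t / ((real n + 1) * (real n + m)))"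
proof -
  have r: "rGamma (real (Suc n) + m) = rGamma (real n + m) / (real n + m)"
    using rGamma_plus1[of "real n + m"] assms(2) by (simp add: field_simps add_ac)
  have p: "t powr (real (Suc n) + m - 1) = t powr (real n + m - 1) * t"
  proof -
    have "t powr (real n + m - 1) * t = t powr (real n + m - 1) * t powr 1" using assms(1) by simp
    also have "\<dots> = t powr (real (Suc n) + m - 1)" by (simp only: powr_add[symmetric]) (simp add: add_ac)
    finally show ?thesis by simp
  qed
  show ?thesis unfolding gk_def r p using assms
    by (simp add: field_simps)
qed

lemma summable_gk:
  assumes "t > 0" "x > 0"
  shows "summable (\<lambda>k. gk m x k t)"
proof (rule summable_ratio_test[where c="1/2" and N="nat \<lceil>2*x*t + \<bar>m\<bar> + 2\<rceil>"])
  fix n assume n: "n \<ge> nat \<lceil>2*x*t + \<bar>m\<bar> + 2\<rceil>"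
  hence n': "real n \<ge> 2*x*t + \<bar>m\<bar> + 2" by linarith
  have "2*x*t \<ge> 0" using assms by simp
  hence nm: "real n + m \<ge> 1" using n' by linarith
  have "(real n + 1) * (real n + m) \<ge> (real n + 1) * 1"
    using nm by (intro mult_left_mono) auto
  hence big: "(real n + 1) * (real n + m) \<ge> 2 * (x*t)" using n' assms by (simp add: algebra_simps)
  have q: "x * t / ((real n + 1) * (real n + m)) \<le> 1/2"
    using big assms nm by (simp add: divide_simps)
  have q0: "x * t / ((real n + 1) * (real n + m)) \<ge> 0"
    using assms nm by simp
  have "norm (gk m x (Suc n) t) = norm (gk m x n t) * (x * t / ((real n + 1) * (real n + m)))"
    using gk_Suc[OF assms(1), of n m x] nm q0 assms by (simp add: abs_mult)
  also have "\<dots> \<le> norm (gk m x n t) * (1/2)"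
    by (intro mult_left_mono q) auto
  finally show "norm (gk m x (Suc n) t) \<le> 1/2 * norm (gk m x n t)" by simp
qed simp
lemma term_eq:
  assumes "t > 0" "x > 0"
  shows "(2 * sqrt (x * t) / 2) powr (2 * real k + (m - 1)) * rGamma (real k + (m - 1) + 1) / fact k
    = (x powr ((m-1)/2) * t powr ((1-m)/2) * exp t) * gk m x k t"
proof -
  have e1: "(2 * sqrt (x * t) / 2) powr (2 * real k + (m - 1)) = exp ((2 * real k + (m - 1)) * (ln x + ln t) / 2)"
    using assms by (simp add: powr_def ln_sqrt ln_mult)
  have e2: "x ^ k = exp (real k * ln x)" using assms by (simp add: powr_realpow[symmetric] powr_def)
  have "(x powr ((m-1)/2) * t powr ((1-m)/2) * exp t) * gk m x k t
     = exp ((m-1)/2 * ln x) * exp ((1-m)/2 * ln t) * exp t * exp (real k * ln x) * exp ((real k + m - 1) * ln t) * exp (-t) * rGamma (real k + m) / fact k"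
    using assms unfolding gk_def e2 by (simp add: powr_def)
  also have "\<dots> = exp ((m-1)/2 * ln x + (1-m)/2 * ln t + t + real k * ln x + (real k + m - 1) * ln t + (-t)) * rGamma (real k + m) / fact k"
    by (simp only: exp_add)
  also have "(m-1)/2 * ln x + (1-m)/2 * ln t + t + real k * ln x + (real k + m - 1) * ln t + (-t) = (2 * real k + (m - 1)) * (ln x + ln t) / 2"
    by (simp add: field_simps)
  finally show ?thesis unfolding e1 by (simp add: add_ac)
qed
lemma integrand_eq:
  assumes "t > 0" "x > 0"
  shows "x powr ((1 - m) / 2) * (t powr ((m - 1) / 2) * exp (- t - x) * besselI (m - 1) (2 * sqrt (x * t)))
     = exp (- x) * (\<Sum>k. gk m x k t)"
proof -
  define K where "K = x powr ((m-1)/2) * t powr ((1-m)/2) * exp t"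
  have b: "besselI (m - 1) (2 * sqrt (x * t)) = K * (\<Sum>k. gk m x k t)"
    unfolding besselI_def term_eq[OF assms] K_def[symmetric]
    by (rule suminf_mult[OF summable_gk[OF assms]])
  have "x powr ((1 - m) / 2) * (t powr ((m - 1) / 2) * exp (- t - x) * K)
     = (x powr ((1 - m) / 2) * x powr ((m-1)/2)) * (t powr ((m - 1) / 2) * t powr ((1-m)/2)) * (exp (- t - x) * exp t)"
    unfolding K_def by (simp add: ac_simps)
  also have "\<dots> = exp (-x)"
    using assms by (simp add: powr_add[symmetric] exp_add[symmetric] field_simps)
  finally show ?thesis unfolding b by (simp add: ac_simps)
qed

lemma marcumQ_eq:
  assumes "y > 0" "x > 0"
  shows "marcumQ m x y = exp (- x) * (LBINT t:{y..}. (\<Sum>k. gk m x k t))"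
proof -
  have "marcumQ m x y = (LBINT t:{y..}. x powr ((1 - m) / 2) * (t powr ((m - 1) / 2) * exp (- t - x) * besselI (m - 1) (2 * sqrt (x * t))))"
    unfolding marcumQ_def by simp
  also have "\<dots> = (LBINT t:{y..}. exp (- x) * (\<Sum>k. gk m x k t))"
    by (rule set_lebesgue_integral_cong) (use assms integrand_eq in auto)
  also have "\<dots> = exp (- x) * (LBINT t:{y..}. (\<Sum>k. gk m x k t))" by simp
  finally show ?thesis .
qed
lemma gk_meas[measurable]: "(\<lambda>t. gk m x k t) \<in> borel_measurable borel"
  unfolding gk_def by measurable

lemma S_meas: "(\<lambda>t. \<Sum>k. gk m x k t) \<in> borel_measurable borel"
  by (rule borel_measurable_suminf) simp

lemma Ici_Ioi:
  fixes y :: real and f :: "real \<Rightarrow> real"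
  assumes "f \<in> borel_measurable borel"
  shows "(LBINT t:{y..}. f t) = (LBINT t:{y<..}. (f t :: real))"
proof (rule set_integral_cong_set)
  have [measurable]: "f \<in> borel_measurable borel" using assms .
  have [simp]: "{y<..} \<in> sets borel" by (rule greaterThan_borel)
  have [simp]: "{y..} \<in> sets borel" by (rule atLeast_borel)
  show "set_borel_measurable lborel {y<..} f" unfolding set_borel_measurable_def
    by (intro borel_measurable_scaleR borel_measurable_indicator) (use assms in auto)
  show "set_borel_measurable lborel {y..} f" unfolding set_borel_measurable_def
    by (intro borel_measurable_scaleR borel_measurable_indicator) (use assms in auto)
  show "AE x in lborel. (x \<in> {y<..}) = (x \<in> {y..})"
    using AE_lborel_singleton[of y] by eventually_elim auto
qed

lemma einterval_y: "einterval (ereal y) \<infinity> = {y<..}"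
  by (auto simp: einterval_def)

lemma FTC_rec:
  fixes m y :: real
  assumes "m < 0" "y > 0"
  shows "set_integrable lborel {y<..} (\<lambda>t. t powr m * exp (-t) - m * (t powr (m-1) * exp (-t)))"
    "(LBINT t:{y<..}. t powr m * exp (-t) - m * (t powr (m-1) * exp (-t))) = y powr m * exp (-y)"
proof -
  define F where "F t = - (t powr m * exp (-t))" for t :: real
  define f where "f t = t powr m * exp (-t) - m * (t powr (m-1) * exp (-t))" for t :: real
  have D: "DERIV F t :> f t" if "t > 0" for t
  proof -
    have d1: "((\<lambda>t. t powr m) has_real_derivative m * t powr (m-1)) (at t)"
      by (rule has_real_derivative_powr) (use that in auto)
    have d2: "((\<lambda>t. exp (-t)) has_real_derivative exp (-t) * (-1)) (at t)"
      by (rule DERIV_chain2[OF DERIV_exp DERIV_minus[OF DERIV_ident]])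
    show ?thesis unfolding F_def f_def
      by (rule DERIV_cong[OF DERIV_minus[OF DERIV_mult[OF d1 d2]]]) (simp add: algebra_simps)
  qed
  have C: "isCont f t" if "t > 0" for t
    unfolding f_def using that by (intro continuous_intros) auto
  have CF: "isCont F t" if "t > 0" for t
    unfolding F_def using that by (intro continuous_intros) auto
  have nn: "f t \<ge> 0" if "t > 0" for t
  proof -
    have a: "t powr m * exp (-t) \<ge> 0" by simp
    have b: "(-m) * (t powr (m-1) * exp (-t)) \<ge> 0" using assms by (intro mult_nonneg_nonneg) auto
    show ?thesis unfolding f_def using a b by linarith
  qed
  have A: "((F \<circ> real_of_ereal) \<longlongrightarrow> F y) (at_right (ereal y))"
    unfolding ereal_tendsto_simps1
    using CF[OF assms(2)] by (simp add: isCont_def filterlim_at_split)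
  have B0: "((\<lambda>t. t powr m) \<longlongrightarrow> 0) at_top"
    by (rule tendsto_neg_powr[OF _ filterlim_ident]) (use assms in auto)
  have B1: "((\<lambda>t::real. exp (-t)) \<longlongrightarrow> 0) at_top"
    using filterlim_compose[OF exp_at_bot filterlim_uminus_at_bot_at_top] by (simp add: o_def)
  have B: "((F \<circ> real_of_ereal) \<longlongrightarrow> 0) (at_left \<infinity>)"
    unfolding ereal_tendsto_simps1 F_def
    using tendsto_minus[OF tendsto_mult[OF B0 B1]] by simp
  have I: "set_integrable lborel (einterval (ereal y) \<infinity>) f"
      "(LBINT x=ereal y..\<infinity>. f x) = 0 - F y"
    by (rule interval_integral_FTC_nonneg[OF _ D C _ A B]; use assms in \<open>auto simp: nn\<close>)+
  show "set_integrable lborel {y<..} (\<lambda>t. t powr m * exp (-t) - m * (t powr (m-1) * exp (-t)))"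
    using I(1) unfolding einterval_y f_def .
  show "(LBINT t:{y<..}. t powr m * exp (-t) - m * (t powr (m-1) * exp (-t))) = y powr m * exp (-y)"
    using I(2) unfolding interval_integral_to_infinity_eq f_def F_def by simp
qed
lemma pos_Ioi:
  fixes h :: "real \<Rightarrow> real"
  assumes I: "set_integrable lborel {y<..} h" and P: "\<And>t. t > y \<Longrightarrow> h t > 0"
  shows "(LBINT t:{y<..}. h t) > 0"
proof -
  define g where "g t = indicator {y<..} t *\<^sub>R h t" for t
  have gi: "integrable lborel g" using I unfolding set_integrable_def g_def .
  have g0: "AE t in lborel. 0 \<le> g t" using P by (auto simp: g_def indicator_def less_imp_le)
  have ge: "integral\<^sup>L lborel g \<ge> 0" using g0 by (rule integral_nonneg_AE)
  have ne: "integral\<^sup>L lborel g \<noteq> 0"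
  proof
    assume "integral\<^sup>L lborel g = 0"
    hence "AE t in lborel. g t = 0" using integral_nonneg_eq_0_iff_AE[OF gi g0] by simp
    hence "AE t in lborel. t \<le> y" proof (rule eventually_mono)
      fix t assume "g t = 0"
      thus "t \<le> y" using P[of t] by (cases "t > y") (auto simp: g_def)
    qed
    then obtain N where N: "{t \<in> space lborel. \<not> t \<le> y} \<subseteq> N" "N \<in> null_sets lborel"
      by (auto elim!: AE_E simp: null_sets_def)
    have "{y<..y+1} \<in> null_sets lborel"
      by (rule null_sets_subset[OF N(2)]) (use N(1) in auto)
    thus False by (simp add: null_sets_def)
  qed
  show ?thesis using ge ne unfolding set_lebesgue_integral_def g_def by simp
qed
lemma gk_nonneg:
  assumes "t > 0" "x > 0" "real k + m > 0"
  shows "gk m x k t > 0"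
  using assms by (simp add: gk_def rGamma_inverse_Gamma)

lemma R_integrable:
  assumes m: "m > -1" and x: "x > 0" and y: "y > 0"
  shows "set_integrable lborel {y<..} (\<lambda>t. \<Sum>k. gk m x (k+2) t)"
proof -
  define h where "h k t = indicator {y<..} t * gk m x (k+2) t" for k t
  have h0: "h k t \<ge> 0" for k t
    using gk_nonneg[of t x "k+2" m] m x y by (auto simp: h_def indicator_def less_imp_le)
  have sumg: "summable (\<lambda>k. gk m x (k+2) t)" if "t > 0" for t
    using summable_ignore_initial_segment[OF summable_gk[OF that x, of m], of 2] .
  have sumh: "summable (\<lambda>k. h k t)" for t
    using sumg[of t] y by (cases "t > y") (auto simp: h_def)
  have eqR: "indicator {y<..} t * (\<Sum>k. gk m x (k+2) t) = (\<Sum>k. h k t)" for t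
    using suminf_mult[OF sumg[of t], of "indicator {y<..} t"] y
    by (cases "t > y") (auto simp: h_def)
  have hm[measurable]: "(\<lambda>t. h k t) \<in> borel_measurable lborel" for k
    unfolding h_def by measurable
  define c where "c k = x ^ (k+2) / fact (k+2)" for k
  have c0: "c k \<ge> 0" for k using x by (simp add: c_def)
  have bnd: "(\<integral>\<^sup>+ t. ennreal (h k t) \<partial>lborel) \<le> ennreal (c k)" for k
  proof -
    define s where "s = real (k+2) + m"
    have s0: "s > 0" using m by (simp add: s_def)
    define d where "d = c k * rGamma s"
    have d0: "d \<ge> 0" using s0 c0 by (simp add: d_def rGamma_inverse_Gamma)
    have HI: "((\<lambda>t. d * (t powr (s - 1) / exp t)) has_integral d * Gamma s) {0..}"
      by (rule has_integral_mult_right[OF Gamma_integral_real[OF s0]])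
    have "(\<integral>\<^sup>+ t. ennreal (indicator {0..} t * (d * (t powr (s - 1) / exp t))) \<partial>lborel) = ennreal (d * Gamma s)"
      by (rule nn_integral_has_integral_lebesgue[OF _ HI]) (use d0 in auto)
    also have "d * Gamma s = c k" using Gamma_real_pos[OF s0] by (simp add: d_def rGamma_inverse_Gamma field_simps)
    finally have E: "(\<integral>\<^sup>+ t. ennreal (indicator {0..} t * (d * (t powr (s - 1) / exp t))) \<partial>lborel) = ennreal (c k)" .
    have "(\<integral>\<^sup>+ t. ennreal (h k t) \<partial>lborel) \<le> (\<integral>\<^sup>+ t. ennreal (indicator {0..} t * (d * (t powr (s - 1) / exp t))) \<partial>lborel)"
    proof (rule nn_integral_mono, rule ennreal_leI)
      fix t :: real
      show "h k t \<le> indicator {0..} t * (d * (t powr (s - 1) / exp t))"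
      proof (cases "t > y")
        case True
        then show ?thesis using y
          by (simp add: h_def gk_def d_def c_def s_def exp_minus field_simps)
      next
        case False
        then show ?thesis using d0 by (simp add: h_def indicator_def)
      qed
    qed
    then show ?thesis using E by simp
  qed
  have sc: "summable c"
  proof -
    have "c = (\<lambda>n. inverse (fact (n+2)) * x ^ (n+2))"
      by (auto simp: c_def divide_inverse mult.commute)
    thus ?thesis using summable_ignore_initial_segment[OF summable_exp[of x], of 2] by simp
  qed
  have "(\<integral>\<^sup>+ t. ennreal (indicator {y<..} t * (\<Sum>k. gk m x (k+2) t)) \<partial>lborel)
      = (\<integral>\<^sup>+ t. (\<Sum>k. ennreal (h k t)) \<partial>lborel)"
    unfolding eqR by (intro nn_integral_cong suminf_ennreal2[symmetric] h0 sumh)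
  also have "\<dots> = (\<Sum>k. \<integral>\<^sup>+ t. ennreal (h k t) \<partial>lborel)"
    by (rule nn_integral_suminf) measurable
  also have "\<dots> \<le> (\<Sum>k. ennreal (c k))"
    by (intro suminf_le bnd summableI)
  also have "\<dots> = ennreal (\<Sum>k. c k)"
    by (rule suminf_ennreal2[OF c0 sc])
  finally have le: "(\<integral>\<^sup>+ t. ennreal (indicator {y<..} t * (\<Sum>k. gk m x (k+2) t)) \<partial>lborel) \<le> ennreal (\<Sum>k. c k)" .
  have fin: "(\<integral>\<^sup>+ t. ennreal (indicator {y<..} t * (\<Sum>k. gk m x (k+2) t)) \<partial>lborel) < top"
    using le_less_trans[OF le ennreal_less_top] .
  show ?thesis
    unfolding set_integrable_def
  proof (rule integrableI_nonneg)
    show "(\<lambda>t. indicat_real {y<..} t *\<^sub>R (\<Sum>k. gk m x (k + 2) t)) \<in> borel_measurable lborel"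
      by measurable
    show "AE t in lborel. 0 \<le> indicat_real {y<..} t *\<^sub>R (\<Sum>k. gk m x (k + 2) t)"
    proof (rule AE_I2)
      fix t :: real
      have "0 \<le> (\<Sum>k. h k t)" by (rule suminf_nonneg[OF sumh h0])
      thus "0 \<le> indicat_real {y<..} t *\<^sub>R (\<Sum>k. gk m x (k + 2) t)" using eqR[of t] by simp
    qed
    show "(\<integral>\<^sup>+ t. ennreal (indicat_real {y<..} t *\<^sub>R (\<Sum>k. gk m x (k + 2) t)) \<partial>lborel) < \<infinity>"
      using fin by simp
  qed
qed
theorem proposition1:
  fixes mu0 x y :: real
  assumes "-1 < mu0" and "mu0 < 0" and "y > 0" and "x > 0"
    and "x \<ge> y powr mu0 * exp (- y) / upper_Gamma (mu0 + 1) y - 1"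
  shows "marcumQ mu0 x y > 0"
proof -
  define m where "m = mu0"
  have m1: "m > -1" and m0: "m < 0" using assms by (auto simp: m_def)
  have y: "y > 0" and x: "x > 0" using assms by auto
  define A where "A = {y<..}"
  define P where "P t = t powr m * exp (-t)" for t :: real
  define Q where "Q t = t powr (m-1) * exp (-t)" for t :: real
  define f where "f t = P t - m * Q t" for t :: real
  define R where "R t = (\<Sum>k. gk m x (k+2) t)" for t
  define S where "S t = (\<Sum>k. gk m x k t)" for t
  have fI: "set_integrable lborel A f" and fV: "(LBINT t:A. f t) = y powr m * exp (-y)"
    using FTC_rec[OF m0 y] unfolding A_def f_def P_def Q_def by auto
  have Pm[measurable]: "P \<in> borel_measurable borel" unfolding P_def by measurable
  have Qm[measurable]: "Q \<in> borel_measurable borel" unfolding Q_def by measurable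
  have PI: "set_integrable lborel A P"
  proof (rule set_integrable_bound[OF fI])
    show "set_borel_measurable lborel A P" unfolding set_borel_measurable_def A_def by measurable
    show "AE t in lborel. t \<in> A \<longrightarrow> norm (P t) \<le> norm (f t)"
    proof (rule AE_I2, intro impI)
      fix t assume "t \<in> A"
      have a: "P t \<ge> 0" by (simp add: P_def)
      have b: "(-m) * Q t \<ge> 0" using m0 by (intro mult_nonneg_nonneg) (auto simp: Q_def)
      show "norm (P t) \<le> norm (f t)" using a b by (simp add: f_def)
    qed
  qed
  have Qeq: "Q = (\<lambda>t. (1/m) * (P t - f t))" using m0 by (auto simp: f_def)
  have QI: "set_integrable lborel A Q"
    unfolding Qeq using PI fI by auto
  have rec: "(LBINT t:A. P t) - m * (LBINT t:A. Q t) = y powr m * exp (-y)"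
    using fV PI QI unfolding f_def by (simp add: set_integral_diff)
  have UG1: "upper_Gamma (mu0 + 1) y = (LBINT t:A. P t)"
    unfolding upper_Gamma_def A_def m_def[symmetric] by (subst Ici_Ioi) (simp_all add: P_def[abs_def])
  have UG0: "upper_Gamma m y = (LBINT t:A. Q t)"
    unfolding upper_Gamma_def A_def by (subst Ici_Ioi) (simp_all add: Q_def[abs_def])
  have Ppos: "(LBINT t:A. P t) > 0"
    unfolding A_def
  proof (rule pos_Ioi)
    show "set_integrable lborel {y<..} P" using PI by (simp add: A_def)
    fix t assume "t > y" thus "P t > 0" using y by (simp add: P_def)
  qed
  have RI: "set_integrable lborel A R"
    unfolding A_def R_def by (rule R_integrable[OF m1 x y])
  have Rpos: "(LBINT t:A. R t) > 0"
    unfolding A_def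
  proof (rule pos_Ioi)
    show "set_integrable lborel {y<..} R" using RI by (simp add: A_def)
    fix t assume "t > y"
    hence t: "t > 0" using y by simp
    show "R t > 0" unfolding R_def
      by (rule suminf_pos[OF summable_ignore_initial_segment[OF summable_gk[OF t x]]])
         (rule gk_nonneg[OF t x], use m1 in simp)
  qed
  have Seq: "S t = rGamma m * Q t + x * rGamma (m + 1) * P t + R t" if "t > 0" for t
  proof -
    have "S t = R t + (\<Sum>i<2. gk m x i t)"
      unfolding S_def R_def by (rule suminf_split_initial_segment[OF summable_gk[OF that x]])
    also have "(\<Sum>i<2. gk m x i t) = rGamma m * Q t + x * rGamma (m + 1) * P t"
      by (simp add: numeral_2_eq_2 gk_def P_def Q_def add_ac)
    finally show ?thesis by simp
  qed
  have SI: "(LBINT t:A. S t) = rGamma m * (LBINT t:A. Q t) + x * rGamma (m + 1) * (LBINT t:A. P t) + (LBINT t:A. R t)"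
  proof -
    have "(LBINT t:A. S t) = (LBINT t:A. rGamma m * Q t + x * rGamma (m + 1) * P t + R t)"
      by (rule set_lebesgue_integral_cong) (use Seq y in \<open>auto simp: A_def\<close>)
    also have "\<dots> = rGamma m * (LBINT t:A. Q t) + x * rGamma (m + 1) * (LBINT t:A. P t) + (LBINT t:A. R t)"
      using PI QI RI by (simp add: set_integral_add)
    finally show ?thesis .
  qed
  have MQ: "marcumQ mu0 x y = exp (-x) * (LBINT t:A. S t)"
    unfolding marcumQ_eq[OF y x] m_def[symmetric] A_def S_def
    by (subst Ici_Ioi[OF S_meas]) simp
  define U where "U = (LBINT t:A. P t)"
  define V where "V = (LBINT t:A. Q t)"
  have hyp: "(x + 1) * U \<ge> y powr m * exp (-y)"
  proof -
    have "x + 1 \<ge> y powr m * exp (- y) / U" using assms(5) UG1 by (simp add: U_def m_def)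
    thus ?thesis using Ppos by (simp add: U_def divide_simps mult.commute)
  qed
  have rG: "rGamma m = m * rGamma (m + 1)" using rGamma_plus1[of m] by simp
  have rG1: "rGamma (m + 1) > 0" using m1 by (simp add: rGamma_inverse_Gamma)
  have "rGamma m * V + x * rGamma (m + 1) * U = rGamma (m + 1) * ((x + 1) * U - y powr m * exp (-y))"
    using rec unfolding rG U_def[symmetric] V_def[symmetric] by (simp add: algebra_simps)
  also have "\<dots> \<ge> 0" using rG1 hyp by simp
  finally have "rGamma m * V + x * rGamma (m + 1) * U \<ge> 0" .
  hence "(LBINT t:A. S t) > 0" using SI Rpos unfolding U_def V_def by linarith
  thus ?thesis unfolding MQ by simp
qed

end
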